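(* Let $1<s_0<s_1$ and let $u$ be a $C^1$ function on $\mathcal{K}_{[s_0,s_1]}$ which vanishes near the conical boundary. Then there is a universal constant $C$ such that $$\|(s/t)u\|_{L^2(\mathcal{H}_{s_1})}\leq \|(s/t)u\|_{L^2(\mathcal{H}_{s_0})} + C\int_{s_0}^{s_1}s^{-1}E_{\mathrm{con}}(s,u)^{1/2}\,ds .$$
   Context: Coordinates $(t,x)\in\mathbb{R}^{2+1}$, $r=|x|$, $s=\sqrt{t^2-r^2}$. $\mathcal{K}=\{t>r+1\}$, $\mathcal{H}_s=\{t=\sqrt{s^2+r^2}\}$, $\mathcal{K}_{[s_0,s_1]}=\{(t,x)\in\mathcal{K}: s_0^2\le t^2-r^2\le s_1^2\}$; "vanishes near the conical boundary" means vanishing in a neighbourhood of $\{t=r+1\}$ (extension by zero outside $\mathcal{K}$). $\|f\|_{L^2(\mathcal{H}_s)}$ is the $L^2(\mathbb{R}^2)$ norm of $x\mapsto f(\sqrt{s^2+|x|^2},x)$, and $\int_{\mathcal{H}_s}f\,dx:=\int_{\mathbb{R}^2}f(\sqrt{s^2+|x|^2},x)dx$. $\bar\partial_s=(s/t)\partial_t$, $\bar\partial_a=(x^a/t)\partial_t+\partial_a$, $K:=s\bar\partial_s+2x^a\bar\partial_a$, and $E_{\mathrm{con}}(s,u):=\int_{\mathcal{H}_s}\big((Ku+u)^2+\sum_a|s\bar\partial_a u|^2\big)dx$. *)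

theory Defs
  imports "HOL-Analysis.Analysis"
begin

text \<open>Spacetime points of R^{2+1} are pairs (t, x) with t :: real and x :: real \<times> real
  (so r = norm x = sqrt(x1^2 + x2^2)).\<close>

type_synonym pt = "real \<times> (real \<times> real)"

definition hs :: "pt \<Rightarrow> real" where
  "hs p = sqrt ((fst p)\<^sup>2 - (norm (snd p))\<^sup>2)"

definition Kcone :: "pt set" where
  "Kcone = {p. fst p > norm (snd p) + 1}"

definition Kseg :: "real \<Rightarrow> real \<Rightarrow> pt set" where
  "Kseg s0 s1 = {p \<in> Kcone. s0\<^sup>2 \<le> (fst p)\<^sup>2 - (norm (snd p))\<^sup>2 \<and>
                             (fst p)\<^sup>2 - (norm (snd p))\<^sup>2 \<le> s1\<^sup>2}"

definition cone_bdry :: "pt set" where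
  "cone_bdry = {p. fst p = norm (snd p) + 1}"

definition zext :: "(pt \<Rightarrow> real) \<Rightarrow> pt \<Rightarrow> real" where
  "zext f p = (if p \<in> Kcone then f p else 0)"

definition hpt :: "real \<Rightarrow> real \<times> real \<Rightarrow> pt" where
  "hpt s x = (sqrt (s\<^sup>2 + (norm x)\<^sup>2), x)"

text \<open>Integral over H_s in the sense of the context: integral over R^2 of f(sqrt(s^2+|x|^2), x).\<close>
definition intH :: "real \<Rightarrow> (pt \<Rightarrow> real) \<Rightarrow> real" where
  "intH s f = (\<integral>x. zext f (hpt s x) \<partial>(lborel :: (real \<times> real) measure))"

definition L2H :: "real \<Rightarrow> (pt \<Rightarrow> real) \<Rightarrow> real" where
  "L2H s f = sqrt (intH s (\<lambda>p. (f p)\<^sup>2))"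

text \<open>C^1 on a set S with partial derivatives ut (in t), u1, u2 (in x^1, x^2).\<close>
definition C1_on :: "pt set \<Rightarrow> (pt \<Rightarrow> real) \<Rightarrow> (pt \<Rightarrow> real) \<Rightarrow> (pt \<Rightarrow> real)
    \<Rightarrow> (pt \<Rightarrow> real) \<Rightarrow> bool" where
  "C1_on S u ut u1 u2 \<longleftrightarrow>
     (\<forall>p\<in>S. (u has_derivative
        (\<lambda>h. ut p * fst h + u1 p * fst (snd h) + u2 p * snd (snd h))) (at p within S))
     \<and> continuous_on S ut \<and> continuous_on S u1 \<and> continuous_on S u2"

definition dbar_s :: "(pt \<Rightarrow> real) \<Rightarrow> pt \<Rightarrow> real" where
  "dbar_s ut p = (hs p / fst p) * ut p"

definition dbar_1 :: "(pt \<Rightarrow> real) \<Rightarrow> (pt \<Rightarrow> real) \<Rightarrow> pt \<Rightarrow> real" where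
  "dbar_1 ut u1 p = (fst (snd p) / fst p) * ut p + u1 p"

definition dbar_2 :: "(pt \<Rightarrow> real) \<Rightarrow> (pt \<Rightarrow> real) \<Rightarrow> pt \<Rightarrow> real" where
  "dbar_2 ut u2 p = (snd (snd p) / fst p) * ut p + u2 p"

definition Kop :: "(pt \<Rightarrow> real) \<Rightarrow> (pt \<Rightarrow> real) \<Rightarrow> (pt \<Rightarrow> real) \<Rightarrow> pt \<Rightarrow> real" where
  "Kop ut u1 u2 p = hs p * dbar_s ut p
      + 2 * (fst (snd p) * dbar_1 ut u1 p + snd (snd p) * dbar_2 ut u2 p)"

definition Econ :: "real \<Rightarrow> (pt \<Rightarrow> real) \<Rightarrow> (pt \<Rightarrow> real) \<Rightarrow> (pt \<Rightarrow> real)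
    \<Rightarrow> (pt \<Rightarrow> real) \<Rightarrow> real" where
  "Econ s u ut u1 u2 = intH s (\<lambda>p. (Kop ut u1 u2 p + u p)\<^sup>2
        + (s * dbar_1 ut u1 p)\<^sup>2 + (s * dbar_2 ut u2 p)\<^sup>2)"

end

theory Submission
  imports Defs
begin

lemma amgm_opt:
  fixes A N M :: real
  assumes h: "\<And>l. l > 0 \<Longrightarrow> A \<le> l * N + M / l" and N: "N \<ge> 0" and M: "M \<ge> 0"
  shows "A \<le> 2 * sqrt (N * M)"
proof (cases "N > 0 \<and> M > 0")
  case True
  define l where "l = sqrt (M / N)"
  have l: "l > 0" using True by (simp add: l_def)
  have "l * N = sqrt (N * M)" using True
    by (simp add: l_def real_sqrt_divide real_sqrt_mult field_simps)
  moreover have "M / l = sqrt (N * M)" using True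
    by (simp add: l_def real_sqrt_divide real_sqrt_mult field_simps)
  ultimately show ?thesis using h[OF l] by simp
next
  case False
  hence "N = 0 \<or> M = 0" using N M by auto
  show ?thesis
  proof (rule ccontr)
    assume "\<not> ?thesis"
    hence A: "A > 0" using N M \<open>N = 0 \<or> M = 0\<close> by auto
    show False
    proof (cases "N = 0")
      case True
      have "2 * M / A \<ge> 0" using A M by simp
      hence pos: "2 * M / A + 1 > 0" by linarith
      have "A \<le> M / (2 * M / A + 1)" using h[OF pos] True by simp
      also have "\<dots> < A" using A M
        by (simp add: field_simps add_pos_nonneg)
      finally show False by simp
    next
      case False
      hence "M = 0" "N > 0" using \<open>N = 0 \<or> M = 0\<close> N by auto
      have "A \<le> (A / (2 * N)) * N" using h[of "A / (2 * N)"] \<open>M = 0\<close> \<open>N > 0\<close> A by simp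
      also have "\<dots> < A" using A \<open>N > 0\<close> by simp
      finally show False by simp
    qed
  qed
qed

lemma pw_bound:
  fixes s x1 x2 v k b1 b2 l :: real
  assumes s: "s > 0" and l: "l > 0"
  shows "2 * (s^2 / (s^2 + x1^2 + x2^2)) * v * (k - (x1 * b1 + x2 * b2))
     \<le> l * (s^2 * v^2 / (s^2 + x1^2 + x2^2)) + 2 * (k^2 + (s * b1)^2 + (s * b2)^2) / l"
proof -
  define Q where "Q = s^2 + x1^2 + x2^2"
  define D where "D = x1 * b1 + x2 * b2"
  have Q: "Q > 0" unfolding Q_def using s by (simp add: add_pos_nonneg)
  have f1: "2 * (l * v) * k \<le> (l * v)^2 / 2 + 2 * k^2"
    using zero_le_power2[of "l * v - 2 * k"] by (simp add: power2_eq_square algebra_simps)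
  have f2: "- 2 * (l * v) * D \<le> (l * v)^2 / 2 + 2 * D^2"
    using zero_le_power2[of "l * v + 2 * D"] by (simp add: power2_eq_square algebra_simps)
  have f3: "D^2 \<le> (x1^2 + x2^2) * (b1^2 + b2^2)"
    using zero_le_power2[of "x1 * b2 - x2 * b1"] unfolding D_def
    by (simp add: power2_eq_square algebra_simps)
  have f4: "(x1^2 + x2^2) * (b1^2 + b2^2) \<le> Q * (b1^2 + b2^2)"
    unfolding Q_def by (intro mult_right_mono) (auto simp: s)
  have f5: "s^2 * k^2 \<le> Q * k^2" unfolding Q_def by (intro mult_right_mono) auto
  have s2: "s^2 \<ge> 0" by simp
  have "2 * l * s^2 * v * (k - D) = s^2 * (2 * (l * v) * k) + s^2 * (- 2 * (l * v) * D)"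
    by (simp add: algebra_simps)
  also have "\<dots> \<le> s^2 * ((l * v)^2 / 2 + 2 * k^2) + s^2 * ((l * v)^2 / 2 + 2 * D^2)"
    by (intro add_mono mult_left_mono f1 f2 s2)
  also have "\<dots> = l^2 * (s^2 * v^2) + 2 * (s^2 * k^2) + 2 * s^2 * D^2"
    by (simp add: algebra_simps power2_eq_square)
  also have "\<dots> \<le> l^2 * (s^2 * v^2) + 2 * (Q * k^2) + 2 * s^2 * (Q * (b1^2 + b2^2))"
    using f3 f4 f5 s2 by (intro add_mono mult_left_mono order.refl) auto
  also have "\<dots> = l^2 * (s^2 * v^2) + 2 * Q * (k^2 + (s * b1)^2 + (s * b2)^2)"
    by (simp add: algebra_simps power2_eq_square)
  finally have main: "2 * l * s^2 * v * (k - D) \<le> l^2 * (s^2 * v^2) + 2 * Q * (k^2 + (s * b1)^2 + (s * b2)^2)" .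
  have "2 * (s^2 / Q) * v * (k - D) = (2 * l * s^2 * v * (k - D)) / (l * Q)"
    using l Q by (simp add: field_simps)
  also have "\<dots> \<le> (l^2 * (s^2 * v^2) + 2 * Q * (k^2 + (s * b1)^2 + (s * b2)^2)) / (l * Q)"
    using l Q main by (intro divide_right_mono) auto
  also have "\<dots> = l * (s^2 * v^2 / Q) + 2 * (k^2 + (s * b1)^2 + (s * b2)^2) / l"
    using l Q by (simp add: field_simps power2_eq_square)
  finally show ?thesis unfolding Q_def D_def .
qed

lemma ibp1:
  fixes g g' :: "real \<Rightarrow> real" and R :: real
  assumes R: "R \<ge> 0"
    and d: "\<And>y. y \<in> {-R..R} \<Longrightarrow> (g has_real_derivative g' y) (at y)"
    and z: "g (-R) = 0" "g R = 0"
  shows "integral {-R..R} (\<lambda>y. g y + y * g' y) = 0"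
proof -
  have "((\<lambda>y. g y + y * g' y) has_integral ((\<lambda>y. y * g y) R - (\<lambda>y. y * g y) (-R))) {-R..R}"
  proof (rule fundamental_theorem_of_calculus)
    show "- R \<le> R" using R by simp
    fix y assume y: "y \<in> {-R..R}"
    have "((\<lambda>y. y * g y) has_real_derivative (g y + y * g' y)) (at y)"
      using DERIV_mult[OF DERIV_ident d[OF y]] by (simp add: algebra_simps)
    then show "((\<lambda>y. y * g y) has_vector_derivative g y + y * g' y) (at y within {-R..R})"
      by (simp add: has_real_derivative_iff_has_vector_derivative has_vector_derivative_at_within)
  qed
  then show ?thesis using z by (simp add: integral_unique)
qed

lemma cont_slice:
  fixes f :: "'a::topological_space \<Rightarrow> 'b::topological_space \<Rightarrow> 'c::topological_space"
  assumes "continuous_on (U \<times> C) (\<lambda>(s, x). f s x)" "s \<in> U"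
  shows "continuous_on C (f s)"
proof -
  have "continuous_on C ((\<lambda>(s, x). f s x) \<circ> (\<lambda>x. (s, x)))"
    by (rule continuous_on_compose[OF _ continuous_on_subset[OF assms(1)]])
       (auto intro!: continuous_intros simp: assms(2))
  then show ?thesis by (simp add: o_def)
qed

lemma core:
  fixes s0 s1 R :: real and v a b1 b2 :: "real \<Rightarrow> real \<times> real \<Rightarrow> real"
  assumes s0: "0 < s0" "s0 < s1" and R: "0 < R"
  and cv: "continuous_on ({s0..s1} \<times> cbox (-R,-R) (R,R)) (\<lambda>p. v (fst p) (snd p))"
  and ca: "continuous_on ({s0..s1} \<times> cbox (-R,-R) (R,R)) (\<lambda>p. a (fst p) (snd p))"
  and cb1: "continuous_on ({s0..s1} \<times> cbox (-R,-R) (R,R)) (\<lambda>p. b1 (fst p) (snd p))"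
  and cb2: "continuous_on ({s0..s1} \<times> cbox (-R,-R) (R,R)) (\<lambda>p. b2 (fst p) (snd p))"
  and da: "\<And>s x. s \<in> {s0..s1} \<Longrightarrow> x \<in> cbox (-R,-R) (R,R) \<Longrightarrow>
             ((\<lambda>s. v s x) has_field_derivative a s x) (at s within {s0..s1})"
  and db1: "\<And>s y1 y2. s \<in> {s0..s1} \<Longrightarrow> ((\<lambda>y. v s (y, y2)) has_field_derivative b1 s (y1, y2)) (at y1)"
  and db2: "\<And>s y1 y2. s \<in> {s0..s1} \<Longrightarrow> ((\<lambda>y. v s (y1, y)) has_field_derivative b2 s (y1, y2)) (at y2)"
  and vz: "\<And>s y1 y2. s \<in> {s0..s1} \<Longrightarrow> \<bar>y1\<bar> = R \<or> \<bar>y2\<bar> = R \<Longrightarrow> v s (y1, y2) = 0"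
  shows "sqrt (integral (cbox (-R,-R) (R,R)) (\<lambda>x. s1^2 * (v s1 x)^2 / (s1^2 + (fst x)^2 + (snd x)^2)))
    \<le> sqrt (integral (cbox (-R,-R) (R,R)) (\<lambda>x. s0^2 * (v s0 x)^2 / (s0^2 + (fst x)^2 + (snd x)^2)))
      + 2 * integral {s0..s1} (\<lambda>s. 1 / s * sqrt (integral (cbox (-R,-R) (R,R))
          (\<lambda>x. (s * a s x + 2 * (fst x * b1 s x + snd x * b2 s x) + v s x)^2
               + (s * b1 s x)^2 + (s * b2 s x)^2)))"
proof -
  define C :: "(real \<times> real) set" where "C = cbox (-R,-R) (R,R)"
  define U where "U = {s0..s1}"
  define h where "h = (\<lambda>s x. s^2 * (v s x)^2 / (s^2 + (fst x)^2 + (snd x)^2))"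
  define hd where "hd = (\<lambda>s x. 2 * s * (v s x)^2 * ((fst x)^2 + (snd x)^2) / (s^2 + (fst x)^2 + (snd x)^2)^2
      + 2 * s^2 * v s x * a s x / (s^2 + (fst x)^2 + (snd x)^2))"
  define h1 where "h1 = (\<lambda>s x. 2 * s^2 * v s x * b1 s x / (s^2 + (fst x)^2 + (snd x)^2)
      - 2 * s^2 * fst x * (v s x)^2 / (s^2 + (fst x)^2 + (snd x)^2)^2)"
  define h2 where "h2 = (\<lambda>s x. 2 * s^2 * v s x * b2 s x / (s^2 + (fst x)^2 + (snd x)^2)
      - 2 * s^2 * snd x * (v s x)^2 / (s^2 + (fst x)^2 + (snd x)^2)^2)"
  define kk where "kk = (\<lambda>s x. s * a s x + 2 * (fst x * b1 s x + snd x * b2 s x) + v s x)"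
  define e where "e = (\<lambda>s x. (kk s x)^2 + (s * b1 s x)^2 + (s * b2 s x)^2)"
  define J where "J = (\<lambda>s x. 2 * (s^2 / (s^2 + (fst x)^2 + (snd x)^2)) * v s x
       * (kk s x - (fst x * b1 s x + snd x * b2 s x)))"
  define N where "N = (\<lambda>s. integral C (h s))"
  define N' where "N' = (\<lambda>s. integral C (hd s))"
  define E where "E = (\<lambda>s. integral C (e s))"
  have Qpos: "s^2 + (fst x)^2 + (snd x)^2 > 0" if "s \<in> U" for s and x :: "real \<times> real"
    using that s0 unfolding U_def by (simp add: add_pos_nonneg)
  have Uc: "\<And>p. p \<in> U \<times> C \<Longrightarrow> (fst p)^2 + (fst (snd p))^2 + (snd (snd p))^2 \<noteq> 0"
    using Qpos by (metis SigmaE fst_conv less_irrefl snd_conv)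
  note cvars = cv[folded C_def U_def] ca[folded C_def U_def] cb1[folded C_def U_def] cb2[folded C_def U_def]
  have ch: "continuous_on (U \<times> C) (\<lambda>(s, x). h s x)"
    unfolding h_def case_prod_unfold using Uc by (intro continuous_intros cvars) auto
  have chd: "continuous_on (U \<times> C) (\<lambda>(s, x). hd s x)"
    unfolding hd_def case_prod_unfold using Uc by (intro continuous_intros cvars) auto
  have ce: "continuous_on (U \<times> C) (\<lambda>(s, x). e s x)"
    unfolding e_def kk_def case_prod_unfold by (intro continuous_intros cvars)
  have cJ: "continuous_on (U \<times> C) (\<lambda>(s, x). J s x)"
    unfolding J_def kk_def case_prod_unfold using Uc by (intro continuous_intros cvars) auto
  have dh: "((\<lambda>s. h s x) has_field_derivative hd s x) (at s within U)" if "s \<in> U" "x \<in> C" for s x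
  proof -
    have d: "((\<lambda>s. v s x) has_field_derivative a s x) (at s within U)"
      using da that unfolding U_def C_def by blast
    have Q: "s^2 + (fst x)^2 + (snd x)^2 \<noteq> 0" using Qpos[OF that(1), of x] by linarith
    show ?thesis unfolding h_def
      apply (rule derivative_eq_intros d refl | simp add: Q)+
      using Q apply (simp add: hd_def divide_simps)
      apply (simp add: algebra_simps power2_eq_square)
      done
  qed
  have dN: "(N has_field_derivative N' s) (at s within U)" if s: "s \<in> U" for s
  proof -
    have "((\<lambda>s. integral (cbox (-R,-R) (R,R)) (h s)) has_vector_derivative integral (cbox (-R,-R) (R,R)) (hd s)) (at s within U)"
    proof (rule leibniz_rule_vector_derivative)
      show "((\<lambda>s. h s t) has_vector_derivative hd s t) (at s within U)"
        if "s \<in> U" "t \<in> cbox (-R, -R) (R, R)" for s t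
        using dh[of s t] that unfolding C_def by (simp add: has_real_derivative_iff_has_vector_derivative)
      show "h s integrable_on cbox (- R, - R) (R, R)" if "s \<in> U" for s
        using cont_slice[OF ch that] unfolding C_def by (rule integrable_continuous)
      show "continuous_on (U \<times> cbox (- R, - R) (R, R)) (\<lambda>(s, t). hd s t)"
        using chd unfolding C_def .
      show "s \<in> U" by (rule s)
      show "convex U" unfolding U_def by (rule convex_real_interval)
    qed
    then show ?thesis unfolding N_def N'_def C_def by (simp add: has_real_derivative_iff_has_vector_derivative)
  qed
  have contN': "continuous_on U N'"
    unfolding N'_def C_def by (rule integral_continuous_on_param) (use chd C_def in simp)
  have contE: "continuous_on U E"
    unfolding E_def C_def by (rule integral_continuous_on_param) (use ce C_def in simp)
  have dh1: "((\<lambda>y. h s (y, y2)) has_field_derivative h1 s (y1, y2)) (at y1)" if "s \<in> U" for s y1 y2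
  proof -
    have d: "((\<lambda>y. v s (y, y2)) has_field_derivative b1 s (y1, y2)) (at y1)"
      using db1 that unfolding U_def by blast
    have Q: "s^2 + y1^2 + y2^2 \<noteq> 0" using Qpos[OF that, of "(y1, y2)"] by simp
    show ?thesis unfolding h_def fst_conv snd_conv
      apply (rule derivative_eq_intros d refl | simp add: Q)+
      using Q apply (simp add: h1_def divide_simps)
      apply (simp add: algebra_simps power2_eq_square)
      done
  qed
  have dh2: "((\<lambda>y. h s (y1, y)) has_field_derivative h2 s (y1, y2)) (at y2)" if "s \<in> U" for s y1 y2
  proof -
    have d: "((\<lambda>y. v s (y1, y)) has_field_derivative b2 s (y1, y2)) (at y2)"
      using db2 that unfolding U_def by blast
    have Q: "s^2 + y1^2 + y2^2 \<noteq> 0" using Qpos[OF that, of "(y1, y2)"] by simp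
    show ?thesis unfolding h_def fst_conv snd_conv
      apply (rule derivative_eq_intros d refl | simp add: Q)+
      using Q apply (simp add: h2_def divide_simps)
      apply (simp add: algebra_simps power2_eq_square)
      done
  qed
  have hz: "h s (y1, y2) = 0" if "s \<in> U" "\<bar>y1\<bar> = R \<or> \<bar>y2\<bar> = R" for s y1 y2
    using vz[of s y1 y2] that unfolding U_def h_def by simp
  have "continuous_on (U \<times> C) (\<lambda>(s, x). h s x + fst x * h1 s x)"
    unfolding h_def h1_def case_prod_unfold using Uc by (intro continuous_intros cvars) auto
  note ch1 = cont_slice[OF this]
  have "continuous_on (U \<times> C) (\<lambda>(s, x). h s x + snd x * h2 s x)"
    unfolding h_def h2_def case_prod_unfold using Uc by (intro continuous_intros cvars) auto
  note ch2 = cont_slice[OF this]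
  have ibpA: "integral C (\<lambda>x. h s x + fst x * h1 s x) = 0" if s: "s \<in> U" for s
  proof -
    have cc: "continuous_on (cbox (-R,-R) (R,R)) (\<lambda>(y1, y2). h s (y1, y2) + y1 * h1 s (y1, y2))"
      using ch1[OF s] unfolding C_def by (simp add: case_prod_unfold)
    have "integral C (\<lambda>x. h s x + fst x * h1 s x)
        = integral (cbox (-R) R) (\<lambda>y1. integral (cbox (-R) R) (\<lambda>y2. h s (y1, y2) + y1 * h1 s (y1, y2)))"
      unfolding C_def by (subst integral_prod_continuous) (use ch1[OF s] C_def in auto)
    also have "\<dots> = integral (cbox (-R) R) (\<lambda>y2. integral (cbox (-R) R) (\<lambda>y1. h s (y1, y2) + y1 * h1 s (y1, y2)))"
      by (rule integral_swap_continuous) (use cc in simp)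
    also have "\<dots> = integral (cbox (-R) R) (\<lambda>y2. 0)"
    proof (rule integral_cong)
      fix y2 :: real
      show "integral (cbox (-R) R) (\<lambda>y1. h s (y1, y2) + y1 * h1 s (y1, y2)) = 0"
        unfolding cbox_interval
        by (rule ibp1[where g = "\<lambda>y. h s (y, y2)" and g' = "\<lambda>y. h1 s (y, y2)"])
           (use R dh1[OF s] hz[OF s] in auto)
    qed
    finally show ?thesis by simp
  qed
  have ibpB: "integral C (\<lambda>x. h s x + snd x * h2 s x) = 0" if s: "s \<in> U" for s
  proof -
    have "integral C (\<lambda>x. h s x + snd x * h2 s x)
        = integral (cbox (-R) R) (\<lambda>y1. integral (cbox (-R) R) (\<lambda>y2. h s (y1, y2) + y2 * h2 s (y1, y2)))"
      unfolding C_def by (subst integral_prod_continuous) (use ch2[OF s] C_def in auto)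
    also have "\<dots> = integral (cbox (-R) R) (\<lambda>y1. 0)"
    proof (rule integral_cong)
      fix y1 :: real
      show "integral (cbox (-R) R) (\<lambda>y2. h s (y1, y2) + y2 * h2 s (y1, y2)) = 0"
        unfolding cbox_interval
        by (rule ibp1[where g = "\<lambda>y. h s (y1, y)" and g' = "\<lambda>y. h2 s (y1, y)"])
           (use R dh2[OF s] hz[OF s] in auto)
    qed
    finally show ?thesis by simp
  qed
  have ident: "s * hd s x = J s x - ((h s x + fst x * h1 s x) + (h s x + snd x * h2 s x))"
    if "s \<in> U" for s x
  proof -
    have Q: "s^2 + (fst x)^2 + (snd x)^2 \<noteq> 0" using Qpos[OF that, of x] by linarith
    show ?thesis using Q
      apply (simp add: hd_def J_def h_def h1_def h2_def kk_def divide_simps)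
      apply (simp add: algebra_simps power2_eq_square)
      done
  qed
  have intC: "f s integrable_on C" if "continuous_on (U \<times> C) (\<lambda>(s, x). f s x)" "s \<in> U"
    for f :: "real \<Rightarrow> real \<times> real \<Rightarrow> real" and s
    using cont_slice[OF that] unfolding C_def by (rule integrable_continuous)
  have sN': "s * N' s = integral C (J s)" if s: "s \<in> U" for s
  proof -
    have i1: "(\<lambda>x. h s x + fst x * h1 s x) integrable_on C"
      using ch1[OF s] unfolding C_def by (rule integrable_continuous)
    have i2: "(\<lambda>x. h s x + snd x * h2 s x) integrable_on C"
      using ch2[OF s] unfolding C_def by (rule integrable_continuous)
    have iJ: "J s integrable_on C" by (rule intC[OF cJ s])
    have "s * N' s = integral C (\<lambda>x. s * hd s x)" unfolding N'_def by simp
    also have "\<dots> = integral C (\<lambda>x. J s x - ((h s x + fst x * h1 s x) + (h s x + snd x * h2 s x)))"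
      using ident[OF s] by simp
    also have "\<dots> = integral C (J s) - (integral C (\<lambda>x. h s x + fst x * h1 s x) + integral C (\<lambda>x. h s x + snd x * h2 s x))"
      by (simp only: integral_diff[OF iJ integrable_add[OF i1 i2]] integral_add[OF i1 i2])
    also have "\<dots> = integral C (J s)" using ibpA[OF s] ibpB[OF s] by simp
    finally show ?thesis .
  qed
  have Nnn: "N s \<ge> 0" if s: "s \<in> U" for s
    unfolding N_def by (rule integral_nonneg[OF intC[OF ch s]]) (simp add: h_def)
  have Enn: "E s \<ge> 0" if s: "s \<in> U" for s
    unfolding E_def by (rule integral_nonneg[OF intC[OF ce s]]) (simp add: e_def)
  have sN'le: "s * N' s \<le> 2 * sqrt (N s * (2 * E s))" if s: "s \<in> U" for s
  proof (rule amgm_opt)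
    show "0 \<le> N s" by (rule Nnn[OF s])
    show "0 \<le> 2 * E s" using Enn[OF s] by simp
    fix l :: real assume l: "l > 0"
    have sp: "s > 0" using s s0 unfolding U_def by auto
    have "integral C (J s) \<le> integral C (\<lambda>x. l * h s x + 2 * e s x / l)"
    proof (rule integral_le)
      show "J s integrable_on C" by (rule intC[OF cJ s])
      show "(\<lambda>x. l * h s x + 2 * e s x / l) integrable_on C"
        using intC[OF ch s] intC[OF ce s]
        by (intro integrable_add integrable_on_mult_right integrable_on_divide) auto
      fix x show "J s x \<le> l * h s x + 2 * e s x / l"
        unfolding J_def h_def e_def using pw_bound[OF sp l, of "fst x" "snd x" "v s x" "kk s x" "b1 s x" "b2 s x"]
        by simp
    qed
    also have "\<dots> = l * N s + 2 * E s / l"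
      using intC[OF ch s] intC[OF ce s] unfolding N_def E_def
      by (simp add: integral_add integrable_on_mult_right integrable_on_divide)
    finally show "s * N' s \<le> l * N s + 2 * E s / l" using sN'[OF s] by simp
  qed
  define g where "g = (\<lambda>s. 1 / s * sqrt (E s))"
  have Upos: "s > 0" if "s \<in> U" for s using that s0 unfolding U_def by auto
  have cg: "continuous_on U g"
    unfolding g_def using Upos
    by (intro continuous_intros contE) (auto dest: Upos)
  have gi: "g integrable_on U" unfolding U_def
    using cg unfolding U_def by (rule integrable_continuous_real)
  have key: "sqrt (N s1) \<le> sqrt (N s0) + sqrt eps + 2 * integral U g" if eps: "eps > 0" for eps
  proof -
    define F where "F = (\<lambda>s. sqrt (N s + eps))"
    define F' where "F' = (\<lambda>s. N' s / (2 * sqrt (N s + eps)))"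
    have pos: "N s + eps > 0" if "s \<in> U" for s using Nnn[OF that] eps by simp
    have dF: "(F has_vector_derivative F' s) (at s within U)" if s: "s \<in> U" for s
    proof -
      have d1: "((\<lambda>s. N s + eps) has_real_derivative N' s) (at s within U)"
        using DERIV_add[OF dN[OF s] DERIV_const[of eps]] by simp
      have "(F has_real_derivative (inverse (sqrt (N s + eps)) / 2 * N' s)) (at s within U)"
        unfolding F_def by (rule DERIV_chain2[OF DERIV_real_sqrt[OF pos[OF s]] d1])
      then have "(F has_real_derivative F' s) (at s within U)"
        unfolding F'_def by (simp add: field_simps)
      then show ?thesis by (simp add: has_real_derivative_iff_has_vector_derivative)
    qed
    have ftc: "(F' has_integral (F s1 - F s0)) U"
      unfolding U_def by (rule fundamental_theorem_of_calculus) (use s0 dF U_def in auto)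
    have F'le: "F' s \<le> 2 * g s" if s: "s \<in> U" for s
    proof -
      have sp: "s > 0" by (rule Upos[OF s])
      have "sqrt (N s * (2 * E s)) = sqrt (N s) * sqrt 2 * sqrt (E s)"
        by (simp add: real_sqrt_mult)
      also have "\<dots> \<le> sqrt (N s + eps) * 2 * sqrt (E s)"
      proof (intro mult_mono)
        show "sqrt (N s) \<le> sqrt (N s + eps)" using eps by simp
        show "sqrt 2 \<le> (2::real)" using real_sqrt_le_mono[of 2 "2^2"] by simp
      qed (use pos[OF s] Enn[OF s] in auto)
      finally have "s * N' s \<le> 4 * sqrt (N s + eps) * sqrt (E s)" using sN'le[OF s] by simp
      hence "N' s \<le> 4 * sqrt (N s + eps) * sqrt (E s) / s" using sp by (simp add: field_simps)
      hence "F' s \<le> (4 * sqrt (N s + eps) * sqrt (E s) / s) / (2 * sqrt (N s + eps))"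
        unfolding F'_def using pos[OF s] by (intro divide_right_mono) auto
      also have "\<dots> = 2 * g s" unfolding g_def using pos[OF s] sp by (simp add: field_simps)
      finally show ?thesis .
    qed
    have "F s1 - F s0 \<le> integral U (\<lambda>s. 2 * g s)"
      using has_integral_le[OF ftc integrable_integral[OF integrable_on_mult_right[OF gi]] F'le] by simp
    hence "F s1 \<le> F s0 + 2 * integral U g" by simp
    moreover have "sqrt (N s1) \<le> F s1" unfolding F_def using eps by simp
    moreover have "F s0 \<le> sqrt (N s0) + sqrt eps" unfolding F_def
      by (rule sqrt_add_le_add_sqrt) (use Nnn[of s0] eps s0 U_def in auto)
    ultimately show ?thesis by linarith
  qed
  have fin: "sqrt (N s1) \<le> sqrt (N s0) + 2 * integral U g"
  proof (rule ccontr)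
    assume "\<not> ?thesis"
    then obtain d where d: "d > 0" "sqrt (N s1) = sqrt (N s0) + 2 * integral U g + d"
      by (metis add.commute add_less_cancel_left diff_add_cancel diff_gt_0_iff_gt linorder_not_le)
    have "sqrt (N s1) \<le> sqrt (N s0) + sqrt ((d/2)^2) + 2 * integral U g"
      by (rule key) (use d in simp)
    also have "sqrt ((d/2)^2) = d / 2" using d by simp
    finally show False using d by simp
  qed
  then show ?thesis
    unfolding N_def h_def C_def g_def E_def e_def kk_def U_def .
qed

lemma core_cont:
  fixes s0 s1 R :: real and v a b1 b2 :: "real \<Rightarrow> real \<times> real \<Rightarrow> real"
  assumes s0: "0 < s0"
  and cv: "continuous_on ({s0..s1} \<times> cbox (-R,-R) (R,R)) (\<lambda>p. v (fst p) (snd p))"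
  and ca: "continuous_on ({s0..s1} \<times> cbox (-R,-R) (R,R)) (\<lambda>p. a (fst p) (snd p))"
  and cb1: "continuous_on ({s0..s1} \<times> cbox (-R,-R) (R,R)) (\<lambda>p. b1 (fst p) (snd p))"
  and cb2: "continuous_on ({s0..s1} \<times> cbox (-R,-R) (R,R)) (\<lambda>p. b2 (fst p) (snd p))"
  shows "continuous_on {s0..s1} (\<lambda>s. 1 / s * sqrt (integral (cbox (-R,-R) (R,R))
          (\<lambda>x. (s * a s x + 2 * (fst x * b1 s x + snd x * b2 s x) + v s x)^2
               + (s * b1 s x)^2 + (s * b2 s x)^2)))"
proof -
  have ce: "continuous_on ({s0..s1} \<times> cbox (-R,-R) (R,R)) (\<lambda>(s, x). (s * a s x + 2 * (fst x * b1 s x + snd x * b2 s x) + v s x)^2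
               + (s * b1 s x)^2 + (s * b2 s x)^2)"
    unfolding case_prod_unfold by (intro continuous_intros cv ca cb1 cb2)
  have "continuous_on {s0..s1} (\<lambda>s. integral (cbox (-R,-R) (R,R))
          (\<lambda>x. (s * a s x + 2 * (fst x * b1 s x + snd x * b2 s x) + v s x)^2
               + (s * b1 s x)^2 + (s * b2 s x)^2))"
    by (rule integral_continuous_on_param[OF ce])
  then show ?thesis using s0 by (intro continuous_intros) auto
qed

lemma norm_sq_pair: "(norm (x :: real \<times> real))^2 = (fst x)^2 + (snd x)^2"
  by (simp add: norm_prod_def)

lemma hpt_simps:
  assumes "s \<ge> 0"
  shows "fst (hpt s x) = sqrt (s^2 + (norm x)^2)" "snd (hpt s x) = x" "hs (hpt s x) = s"
  using assms by (simp_all add: hpt_def hs_def)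

lemma hpt_Kcone:
  assumes "s > 0"
  shows "hpt s x \<in> Kcone \<longleftrightarrow> norm x < (s^2 - 1) / 2"
proof -
  have "hpt s x \<in> Kcone \<longleftrightarrow> norm x + 1 < sqrt (s^2 + (norm x)^2)"
    by (simp add: Kcone_def hpt_def)
  also have "\<dots> \<longleftrightarrow> (norm x + 1)^2 < s^2 + (norm x)^2"
  proof
    assume "norm x + 1 < sqrt (s^2 + (norm x)^2)"
    hence "(norm x + 1)^2 < (sqrt (s^2 + (norm x)^2))^2"
      by (intro power_strict_mono) auto
    thus "(norm x + 1)^2 < s^2 + (norm x)^2" by simp
  next
    assume "(norm x + 1)^2 < s^2 + (norm x)^2"
    thus "norm x + 1 < sqrt (s^2 + (norm x)^2)" by (rule real_less_rsqrt)
  qed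
  also have "\<dots> \<longleftrightarrow> norm x < (s^2 - 1) / 2"
    by (simp add: power2_eq_square algebra_simps)
  finally show ?thesis .
qed

lemma hpt_Kseg:
  assumes "0 < s0" "s \<in> {s0..s1}"
  shows "hpt s x \<in> Kseg s0 s1 \<longleftrightarrow> norm x < (s^2 - 1) / 2"
proof -
  have s: "s > 0" using assms by auto
  have "(fst (hpt s x))^2 - (norm (snd (hpt s x)))^2 = s^2"
    by (simp add: hpt_def)
  moreover have "s0^2 \<le> s^2" "s^2 \<le> s1^2" using assms by (auto intro!: power_mono)
  ultimately show ?thesis unfolding Kseg_def using hpt_Kcone[OF s] by auto
qed

lemma band_V:
  assumes s0: "0 < s0" and V: "open V" "cone_bdry \<subseteq> V"
  obtains \<delta> where "\<delta> > 0"
    "\<And>s x. s \<in> {s0..s1} \<Longrightarrow> (s^2-1)/2 - 4*\<delta> < norm x \<Longrightarrow> norm x < (s^2-1)/2 \<Longrightarrow> hpt s x \<in> V"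
proof -
  define A where "A = (\<lambda>x::real\<times>real. (norm x + 1, x)) ` cball 0 ((s1^2-1)/2)"
  have cA: "compact A" unfolding A_def
    by (intro compact_continuous_image continuous_intros compact_cball)
  have AV: "A \<subseteq> V" using V(2) unfolding A_def cone_bdry_def by auto
  obtain e where e: "e > 0" "(\<Union>x\<in>A. ball x e) \<subseteq> V"
    using compact_subset_open_imp_ball_epsilon_subset[OF cA V(1) AV] by blast
  show ?thesis
  proof (rule that[of "e/8"])
    show "e / 8 > 0" using e by simp
    fix s and x :: "real \<times> real"
    assume s: "s \<in> {s0..s1}" and lo: "(s^2-1)/2 - 4*(e/8) < norm x" and hi: "norm x < (s^2-1)/2"
    have sp: "s > 0" using s s0 by auto
    define r where "r = norm x"
    define T where "T = sqrt (s^2 + r^2)"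
    define m where "m = s^2 - 1 - 2 * r"
    have r0: "r \<ge> 0" unfolding r_def by simp
    have m0: "m > 0" using hi unfolding m_def r_def by simp
    have me: "m < e" using lo unfolding m_def r_def by (simp add: field_simps)
    have "s^2 \<le> s1^2" using s sp by (intro power_mono) auto
    hence "norm x \<le> (s1^2-1)/2" using hi by (simp add: divide_right_mono)
    hence qA: "(r + 1, x) \<in> A" unfolding A_def r_def by (intro rev_image_eqI[of x]) auto
    have Tlo: "r + 1 < T" using hpt_Kcone[OF sp, of x] hi unfolding Kcone_def T_def r_def
      by (simp add: hpt_def)
    have "s^2 + r^2 \<le> (r + 1 + m)^2"
    proof -
      have "s^2 + r^2 = (r+1)^2 + m" unfolding m_def by (simp add: power2_eq_square algebra_simps)
      moreover have "m * 1 \<le> m * (2 * (r + 1))" using m0 r0 by (intro mult_left_mono) auto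
      moreover have "m^2 \<ge> 0" by simp
      ultimately show ?thesis using mult_nonneg_nonneg[of m m] m0 by (simp add: power2_eq_square algebra_simps) (smt (verit) mult_nonneg_nonneg)
    qed
    hence Thi: "T \<le> r + 1 + m" unfolding T_def using r0 m0 by (intro real_le_lsqrt) auto
    have "dist (hpt s x) (r + 1, x) = \<bar>T - (r + 1)\<bar>"
      unfolding hpt_def T_def r_def by (simp add: dist_Pair_Pair dist_real_def)
    also have "\<dots> < e" using Tlo Thi me by simp
    finally have "hpt s x \<in> ball (r + 1, x) e" by (simp add: dist_commute)
    thus "hpt s x \<in> V" using e(2) qA by blast
  qed
qed

definition Zf :: "(pt \<Rightarrow> real) \<Rightarrow> real \<Rightarrow> real \<times> real \<Rightarrow> real" where
  "Zf f s x = zext f (hpt s x)"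

lemma chain_Kseg:
  assumes C1: "C1_on S u ut u1 u2"
    and gS: "g ` T \<subseteq> S" and z: "z \<in> T"
    and dg: "(g has_vector_derivative g') (at z within T)"
  shows "((\<lambda>y. u (g y)) has_field_derivative
     (ut (g z) * fst g' + u1 (g z) * fst (snd g') + u2 (g z) * snd (snd g'))) (at z within T)"
proof -
  have du: "\<And>p. p \<in> S \<Longrightarrow> (u has_derivative
        (\<lambda>h. ut p * fst h + u1 p * fst (snd h) + u2 p * snd (snd h))) (at p within S)"
    using C1 unfolding C1_on_def by blast
  have "((\<lambda>y. u (g y)) has_derivative
      (\<lambda>h. (\<lambda>p h. ut p * fst h + u1 p * fst (snd h) + u2 p * snd (snd h)) (g z) (h *\<^sub>R g'))) (at z within T)"
    by (rule has_derivative_in_compose2[OF du gS z]) (use dg in \<open>auto simp: has_vector_derivative_def\<close>)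
  then show ?thesis unfolding has_field_derivative_def
    by (rule has_derivative_eq_rhs) (auto simp: fun_eq_iff algebra_simps)
qed

locale cfg =
  fixes s0 s1 :: real and u ut u1 u2 :: "pt \<Rightarrow> real" and V :: "pt set" and \<delta> :: real
  assumes s0: "1 < s0" "s0 < s1"
    and C1: "C1_on (Kseg s0 s1) u ut u1 u2"
    and uV: "\<forall>p\<in>Kseg s0 s1 \<inter> V. u p = 0"
    and dpos: "\<delta> > 0"
    and band: "\<And>s x. s \<in> {s0..s1} \<Longrightarrow> (s^2-1)/2 - 4*\<delta> < norm x \<Longrightarrow> norm x < (s^2-1)/2 \<Longrightarrow> hpt s x \<in> V"
begin

lemma Upos: "s \<in> {s0..s1} \<Longrightarrow> s > 0" using s0 by auto

lemma Z0: assumes "s \<in> {s0..s1}" "(s^2-1)/2 - 4*\<delta> < norm x" shows "Zf u s x = 0"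
proof (cases "norm x < (s^2-1)/2")
  case True
  then have "hpt s x \<in> Kseg s0 s1 \<inter> V" using hpt_Kseg[of s0 s s1 x] band[OF assms True] assms s0 by auto
  then show ?thesis using uV unfolding Zf_def zext_def by auto
next
  case False
  then show ?thesis using hpt_Kcone[OF Upos[OF assms(1)], of x] unfolding Zf_def zext_def by auto
qed

lemma D_s:
  assumes s: "s \<in> {s0..s1}" and x: "norm x < (s^2-1)/2"
  shows "((\<lambda>\<sigma>. Zf u \<sigma> x) has_real_derivative dbar_s ut (hpt s x)) (at s within {s0..s1})"
proof -
  define Op where "Op = {\<sigma>::real. norm x < (\<sigma>^2-1)/2}"
  define S where "S = {s0..s1} \<inter> Op"
  have oOp: "open Op" unfolding Op_def by (intro open_Collect_less continuous_intros) auto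
  have sS: "s \<in> S" using s x unfolding S_def Op_def by auto
  have gS: "(\<lambda>\<sigma>. hpt \<sigma> x) ` S \<subseteq> Kseg s0 s1"
    using hpt_Kseg[of s0 _ s1 x] s0 unfolding S_def Op_def by auto
  define T where "T = sqrt (s^2 + (norm x)^2)"
  have Tpos: "T > 0" unfolding T_def using Upos[OF s] by (simp add: add_pos_nonneg)
  have d1: "((\<lambda>\<sigma>. sqrt (\<sigma>^2 + (norm x)^2)) has_real_derivative s / T) (at s within S)"
  proof -
    have pos: "0 < s^2 + (norm x)^2" using Upos[OF s] by (simp add: add_pos_nonneg)
    have di: "((\<lambda>\<sigma>. \<sigma>^2 + (norm x)^2) has_real_derivative 2 * s) (at s within S)"
      by (auto intro!: derivative_eq_intros)
    from DERIV_chain2[OF DERIV_real_sqrt[OF pos] di] show ?thesis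
      unfolding T_def by (simp add: field_simps)
  qed
  have "((\<lambda>\<sigma>. hpt \<sigma> x) has_vector_derivative (s / T, (0, 0))) (at s within S)"
    unfolding hpt_def
    by (intro has_vector_derivative_Pair d1[unfolded has_real_derivative_iff_has_vector_derivative])
       (simp add: zero_prod_def[symmetric])
  from chain_Kseg[OF C1 gS sS this]
  have "((\<lambda>\<sigma>. u (hpt \<sigma> x)) has_field_derivative ut (hpt s x) * (s / T)) (at s within S)" by simp
  then have "((\<lambda>\<sigma>. Zf u \<sigma> x) has_field_derivative ut (hpt s x) * (s / T)) (at s within S)"
  proof (rule has_field_derivative_transform_within[OF _ zero_less_one sS])
    fix \<sigma> assume "\<sigma> \<in> S"
    then have "hpt \<sigma> x \<in> Kcone" using gS Kseg_def by auto
    then show "u (hpt \<sigma> x) = Zf u \<sigma> x" by (simp add: Zf_def zext_def)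
  qed
  moreover have "at s within S = at s within {s0..s1}"
    by (rule at_within_nhd[of _ Op]) (use sS oOp S_def in auto)
  moreover have "ut (hpt s x) * (s / T) = dbar_s ut (hpt s x)"
    using Upos[OF s] unfolding dbar_s_def T_def by (simp add: hpt_simps)
  ultimately show ?thesis by simp
qed


lemma D_1:
  assumes s: "s \<in> {s0..s1}" and x: "norm (y1, y2) < (s^2-1)/2"
  shows "((\<lambda>y. Zf u s (y, y2)) has_real_derivative dbar_1 ut u1 (hpt s (y1, y2))) (at y1)"
proof -
  define Op where "Op = {y::real. norm (y, y2) < (s^2-1)/2}"
  have oOp: "open Op" unfolding Op_def by (intro open_Collect_less continuous_intros)
  have sS: "y1 \<in> Op" using x unfolding Op_def by auto
  have gS: "(\<lambda>y. hpt s (y, y2)) ` Op \<subseteq> Kseg s0 s1"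
    using hpt_Kseg[of s0 s s1] s s0 unfolding Op_def by auto
  define T where "T = sqrt (s^2 + (y1^2 + y2^2))"
  have pos: "0 < s^2 + (y1^2 + y2^2)" using Upos[OF s] by (simp add: add_pos_nonneg)
  have d1: "((\<lambda>y. sqrt (s^2 + (y^2 + y2^2))) has_real_derivative y1 / T) (at y1 within Op)"
  proof -
    have di: "((\<lambda>y. s^2 + (y^2 + y2^2)) has_real_derivative 2 * y1) (at y1 within Op)"
      by (auto intro!: derivative_eq_intros)
    from DERIV_chain2[OF DERIV_real_sqrt[OF pos] di] show ?thesis
      unfolding T_def by (simp add: field_simps)
  qed
  have eqh: "(\<lambda>y. hpt s (y, y2)) = (\<lambda>y. (sqrt (s^2 + (y^2 + y2^2)), (y, y2)))"
    by (simp add: hpt_def norm_sq_pair)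
  have "((\<lambda>y. hpt s (y, y2)) has_vector_derivative (y1 / T, (1::real, 0::real))) (at y1 within Op)"
    unfolding eqh
    by (intro has_vector_derivative_Pair d1[unfolded has_real_derivative_iff_has_vector_derivative])
       (auto intro!: derivative_eq_intros)
  from chain_Kseg[OF C1 gS sS this]
  have "((\<lambda>y. u (hpt s (y, y2))) has_field_derivative dbar_1 ut u1 (hpt s (y1, y2))) (at y1 within Op)"
    using Upos[OF s] by (simp add: dbar_1_def hpt_def T_def norm_sq_pair field_simps)
  then have "((\<lambda>y. u (hpt s (y, y2))) has_field_derivative dbar_1 ut u1 (hpt s (y1, y2))) (at y1)"
    using at_within_open[OF sS oOp] by simp
  then show ?thesis
  proof (rule has_field_derivative_transform_within_open[OF _ oOp sS])
    fix y assume "y \<in> Op"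
    then have "hpt s (y, y2) \<in> Kcone" using gS Kseg_def by auto
    then show "u (hpt s (y, y2)) = Zf u s (y, y2)" by (simp add: Zf_def zext_def)
  qed
qed

lemma D_2:
  assumes s: "s \<in> {s0..s1}" and x: "norm (y1, y2) < (s^2-1)/2"
  shows "((\<lambda>y. Zf u s (y1, y)) has_real_derivative dbar_2 ut u2 (hpt s (y1, y2))) (at y2)"
proof -
  define Op where "Op = {y::real. norm (y1, y) < (s^2-1)/2}"
  have oOp: "open Op" unfolding Op_def by (intro open_Collect_less continuous_intros)
  have sS: "y2 \<in> Op" using x unfolding Op_def by auto
  have gS: "(\<lambda>y. hpt s (y1, y)) ` Op \<subseteq> Kseg s0 s1"
    using hpt_Kseg[of s0 s s1] s s0 unfolding Op_def by auto
  define T where "T = sqrt (s^2 + (y1^2 + y2^2))"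
  have pos: "0 < s^2 + (y1^2 + y2^2)" using Upos[OF s] by (simp add: add_pos_nonneg)
  have d1: "((\<lambda>y. sqrt (s^2 + (y1^2 + y^2))) has_real_derivative y2 / T) (at y2 within Op)"
  proof -
    have di: "((\<lambda>y. s^2 + (y1^2 + y^2)) has_real_derivative 2 * y2) (at y2 within Op)"
      by (auto intro!: derivative_eq_intros)
    from DERIV_chain2[OF DERIV_real_sqrt[OF pos] di] show ?thesis
      unfolding T_def by (simp add: field_simps)
  qed
  have eqh: "(\<lambda>y. hpt s (y1, y)) = (\<lambda>y. (sqrt (s^2 + (y1^2 + y^2)), (y1, y)))"
    by (simp add: hpt_def norm_sq_pair)
  have "((\<lambda>y. hpt s (y1, y)) has_vector_derivative (y2 / T, (0::real, 1::real))) (at y2 within Op)"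
    unfolding eqh
    by (intro has_vector_derivative_Pair d1[unfolded has_real_derivative_iff_has_vector_derivative])
       (auto intro!: derivative_eq_intros)
  from chain_Kseg[OF C1 gS sS this]
  have "((\<lambda>y. u (hpt s (y1, y))) has_field_derivative dbar_2 ut u2 (hpt s (y1, y2))) (at y2 within Op)"
    using Upos[OF s] by (simp add: dbar_2_def hpt_def T_def norm_sq_pair field_simps)
  then have "((\<lambda>y. u (hpt s (y1, y))) has_field_derivative dbar_2 ut u2 (hpt s (y1, y2))) (at y2)"
    using at_within_open[OF sS oOp] by simp
  then show ?thesis
  proof (rule has_field_derivative_transform_within_open[OF _ oOp sS])
    fix y assume "y \<in> Op"
    then have "hpt s (y1, y) \<in> Kcone" using gS Kseg_def by auto
    then show "u (hpt s (y1, y)) = Zf u s (y1, y)" by (simp add: Zf_def zext_def)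
  qed
qed


lemma Zloc_s:
  assumes s: "s \<in> {s0..s1}" and x: "(s^2-1)/2 - 4*\<delta> < norm x"
  shows "((\<lambda>\<sigma>. Zf u \<sigma> x) has_real_derivative 0) (at s within {s0..s1})"
proof -
  define Op where "Op = {\<sigma>::real. (\<sigma>^2-1)/2 - 4*\<delta> < norm x}"
  have oOp: "open Op" unfolding Op_def by (intro open_Collect_less continuous_intros) auto
  have sO: "s \<in> Op" using x unfolding Op_def by auto
  obtain d where d: "d > 0" "ball s d \<subseteq> Op" using openE[OF oOp sO] by blast
  show ?thesis
  proof (rule has_field_derivative_transform_within[OF DERIV_const d(1) s])
    fix \<sigma> assume "\<sigma> \<in> {s0..s1}" "dist \<sigma> s < d"
    then have "\<sigma> \<in> Op" "\<sigma> \<in> {s0..s1}" using d(2) by (auto simp: dist_commute)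
    then show "0 = Zf u \<sigma> x" using Z0[of \<sigma> x] unfolding Op_def by auto
  qed
qed

lemma Zloc_1:
  assumes s: "s \<in> {s0..s1}" and x: "(s^2-1)/2 - 4*\<delta> < norm (y1, y2)"
  shows "((\<lambda>y. Zf u s (y, y2)) has_real_derivative 0) (at y1)"
proof -
  define Op where "Op = {y::real. (s^2-1)/2 - 4*\<delta> < norm (y, y2)}"
  have oOp: "open Op" unfolding Op_def by (intro open_Collect_less continuous_intros)
  have sO: "y1 \<in> Op" using x unfolding Op_def by auto
  show ?thesis
  proof (rule has_field_derivative_transform_within_open[OF DERIV_const oOp sO])
    fix y assume "y \<in> Op"
    then show "0 = Zf u s (y, y2)" using Z0[OF s, of "(y, y2)"] unfolding Op_def by auto
  qed
qed

lemma Zloc_2: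
  assumes s: "s \<in> {s0..s1}" and x: "(s^2-1)/2 - 4*\<delta> < norm (y1, y2)"
  shows "((\<lambda>y. Zf u s (y1, y)) has_real_derivative 0) (at y2)"
proof -
  define Op where "Op = {y::real. (s^2-1)/2 - 4*\<delta> < norm (y1, y)}"
  have oOp: "open Op" unfolding Op_def by (intro open_Collect_less continuous_intros)
  have sO: "y2 \<in> Op" using x unfolding Op_def by auto
  show ?thesis
  proof (rule has_field_derivative_transform_within_open[OF DERIV_const oOp sO])
    fix y assume "y \<in> Op"
    then show "0 = Zf u s (y1, y)" using Z0[OF s, of "(y1, y)"] unfolding Op_def by auto
  qed
qed

lemma band0:
  assumes s: "s \<in> {s0..s1}" and lo: "(s^2-1)/2 - 4*\<delta> < norm (y1, y2)" and hi: "norm (y1, y2) < (s^2-1)/2"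
  shows "ut (hpt s (y1, y2)) = 0" "u1 (hpt s (y1, y2)) = 0" "u2 (hpt s (y1, y2)) = 0"
proof -
  have sp: "s > 0" using Upos[OF s] .
  define T where "T = sqrt (s^2 + (norm (y1, y2))^2)"
  have Tpos: "T > 0" unfolding T_def using sp by (simp add: add_pos_nonneg)
  have "dbar_s ut (hpt s (y1, y2)) = 0"
    using vector_derivative_unique_within_closed_interval[of s0 s1 s "\<lambda>\<sigma>. Zf u \<sigma> (y1, y2)"]
      D_s[OF s hi] Zloc_s[OF s lo] s s0
    by (simp add: has_real_derivative_iff_has_vector_derivative cbox_interval)
  then show ut0: "ut (hpt s (y1, y2)) = 0"
    unfolding dbar_s_def using sp Tpos by (simp add: hpt_simps T_def[symmetric])
  have "dbar_1 ut u1 (hpt s (y1, y2)) = 0"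
    using DERIV_unique[OF D_1[OF s hi] Zloc_1[OF s lo]] .
  then show "u1 (hpt s (y1, y2)) = 0" unfolding dbar_1_def using ut0 by simp
  have "dbar_2 ut u2 (hpt s (y1, y2)) = 0"
    using DERIV_unique[OF D_2[OF s hi] Zloc_2[OF s lo]] .
  then show "u2 (hpt s (y1, y2)) = 0" unfolding dbar_2_def using ut0 by simp
qed

end

lemma cont_at_local:
  assumes "p \<in> Op" "open Op" "continuous_on (S \<inter> Op) g" "p \<in> S" "\<And>q. q \<in> S \<inter> Op \<Longrightarrow> f q = g q"
  shows "continuous (at p within S) f"
proof -
  have "continuous_on (S \<inter> Op) f" using assms(3,5) by (metis continuous_on_eq)
  then have "continuous (at p within S \<inter> Op) f"
    using assms(1,4) continuous_on_eq_continuous_within by blast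
  moreover have "at p within S = at p within S \<inter> Op"
    by (rule at_within_nhd[OF assms(1,2)]) auto
  ultimately show ?thesis by (simp add: continuous_within)
qed

context cfg begin

lemma da_full:
  assumes s: "s \<in> {s0..s1}"
  shows "((\<lambda>\<sigma>. Zf u \<sigma> x) has_real_derivative Zf (dbar_s ut) s x) (at s within {s0..s1})"
proof (cases "norm x < (s^2-1)/2")
  case True
  then show ?thesis using D_s[OF s True] hpt_Kcone[OF Upos[OF s], of x]
    by (simp add: Zf_def zext_def)
next
  case False
  then have "(s^2-1)/2 - 4*\<delta> < norm x" using dpos by (simp add: field_simps)
  then show ?thesis using Zloc_s[OF s] False hpt_Kcone[OF Upos[OF s], of x]
    by (simp add: Zf_def zext_def)
qed

lemma db1_full:
  assumes s: "s \<in> {s0..s1}"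
  shows "((\<lambda>y. Zf u s (y, y2)) has_real_derivative Zf (dbar_1 ut u1) s (y1, y2)) (at y1)"
proof (cases "norm (y1, y2) < (s^2-1)/2")
  case True
  then show ?thesis using D_1[OF s True] hpt_Kcone[OF Upos[OF s], of "(y1, y2)"]
    by (simp add: Zf_def zext_def)
next
  case False
  then have "(s^2-1)/2 - 4*\<delta> < norm (y1, y2)" using dpos by (simp add: field_simps)
  then show ?thesis using Zloc_1[OF s] False hpt_Kcone[OF Upos[OF s], of "(y1, y2)"]
    by (simp add: Zf_def zext_def)
qed

lemma db2_full:
  assumes s: "s \<in> {s0..s1}"
  shows "((\<lambda>y. Zf u s (y1, y)) has_real_derivative Zf (dbar_2 ut u2) s (y1, y2)) (at y2)"
proof (cases "norm (y1, y2) < (s^2-1)/2")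
  case True
  then show ?thesis using D_2[OF s True] hpt_Kcone[OF Upos[OF s], of "(y1, y2)"]
    by (simp add: Zf_def zext_def)
next
  case False
  then have "(s^2-1)/2 - 4*\<delta> < norm (y1, y2)" using dpos by (simp add: field_simps)
  then show ?thesis using Zloc_2[OF s] False hpt_Kcone[OF Upos[OF s], of "(y1, y2)"]
    by (simp add: Zf_def zext_def)
qed

lemma Zband:
  assumes s: "s \<in> {s0..s1}" and lo: "(s^2-1)/2 - 4*\<delta> < norm x"
  shows "Zf u s x = 0" "Zf (dbar_s ut) s x = 0" "Zf (dbar_1 ut u1) s x = 0" "Zf (dbar_2 ut u2) s x = 0"
proof -
  show "Zf u s x = 0" by (rule Z0[OF s lo])
  obtain y1 y2 where x: "x = (y1, y2)" by (cases x)
  have "Zf (dbar_s ut) s x = 0 \<and> Zf (dbar_1 ut u1) s x = 0 \<and> Zf (dbar_2 ut u2) s x = 0"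
  proof (cases "norm x < (s^2-1)/2")
    case True
    then show ?thesis using band0[OF s lo[unfolded x]] x
      by (simp add: Zf_def zext_def dbar_s_def dbar_1_def dbar_2_def)
  next
    case False
    then show ?thesis using hpt_Kcone[OF Upos[OF s], of x] by (simp add: Zf_def zext_def)
  qed
  then show "Zf (dbar_s ut) s x = 0" "Zf (dbar_1 ut u1) s x = 0" "Zf (dbar_2 ut u2) s x = 0" by auto
qed

lemma Zcont:
  assumes cF: "continuous_on (Kseg s0 s1) F"
    and zF: "\<And>s x. s \<in> {s0..s1} \<Longrightarrow> (s^2-1)/2 - 4*\<delta> < norm x \<Longrightarrow> Zf F s x = 0"
  shows "continuous_on ({s0..s1} \<times> UNIV) (\<lambda>p. Zf F (fst p) (snd p))"
proof -
  let ?S = "{s0..s1} \<times> (UNIV :: (real \<times> real) set)"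
  define O1 where "O1 = {q :: real \<times> real \<times> real. norm (snd q) < ((fst q)^2-1)/2}"
  define O2 where "O2 = {q :: real \<times> real \<times> real. ((fst q)^2-1)/2 - 4*\<delta> < norm (snd q)}"
  have o1: "open O1" unfolding O1_def by (intro open_Collect_less continuous_intros) auto
  have o2: "open O2" unfolding O2_def by (intro open_Collect_less continuous_intros) auto
  have sub: "(\<lambda>q. hpt (fst q) (snd q)) ` (?S \<inter> O1) \<subseteq> Kseg s0 s1"
    using hpt_Kseg[of s0] s0 unfolding O1_def by auto
  have ch: "continuous_on (?S \<inter> O1) (\<lambda>q. hpt (fst q) (snd q))"
    unfolding hpt_def by (intro continuous_intros)
  have c1: "continuous_on (?S \<inter> O1) (\<lambda>q. F (hpt (fst q) (snd q)))"
    by (rule continuous_on_compose2[OF cF ch sub])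
  show ?thesis
  proof (clarsimp simp: continuous_on_eq_continuous_within)
    fix s and x :: "real \<times> real" assume s: "s0 \<le> s" "s \<le> s1"
    show "continuous (at (s, x) within ?S) (\<lambda>p. Zf F (fst p) (snd p))"
    proof (cases "norm x < (s^2-1)/2")
      case True
      show ?thesis
      proof (rule cont_at_local[OF _ o1 c1])
        show "(s, x) \<in> O1" using True unfolding O1_def by simp
        show "(s, x) \<in> ?S" using s by simp
        fix q assume "q \<in> ?S \<inter> O1"
        then have "hpt (fst q) (snd q) \<in> Kseg s0 s1" using sub by auto
        then show "Zf F (fst q) (snd q) = F (hpt (fst q) (snd q))"
          by (simp add: Zf_def zext_def Kseg_def)
      qed
    next
      case False
      show ?thesis
      proof (rule cont_at_local[OF _ o2 continuous_on_const])
        show "(s, x) \<in> O2" using False dpos unfolding O2_def by (simp add: field_simps)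
        show "(s, x) \<in> ?S" using s by simp
        fix q assume "q \<in> ?S \<inter> O2"
        then show "Zf F (fst q) (snd q) = 0" using zF[of "fst q" "snd q"] unfolding O2_def
          by (auto simp: mem_Times_iff)
      qed
    qed
  qed
qed

end

lemma bochner_hk:
  fixes \<phi> :: "real \<times> real \<Rightarrow> real"
  assumes c: "continuous_on (cbox a b) \<phi>" and z: "\<And>x. x \<notin> cbox a b \<Longrightarrow> \<phi> x = 0"
  shows "integral\<^sup>L lborel \<phi> = integral (cbox a b) \<phi>"
proof -
  have eq: "(\<lambda>x. indicator (cbox a b) x *\<^sub>R \<phi> x) = \<phi>"
    using z by (auto simp: fun_eq_iff indicator_def)
  have "integrable lborel \<phi>" using borel_integrable_compact[OF compact_cbox c] unfolding eq .
  then have "(\<phi> has_integral integral\<^sup>L lborel \<phi>) UNIV" by (rule has_integral_integral_lborel)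
  then have "integral UNIV \<phi> = integral\<^sup>L lborel \<phi>" by (rule integral_unique)
  moreover have "(\<lambda>x. if x \<in> cbox a b then \<phi> x else 0) = \<phi>" using z by auto
  ultimately show ?thesis using integral_restrict_UNIV[of "cbox a b" \<phi>] by simp
qed

context cfg begin

lemma Kseg_fst: "p \<in> Kseg s0 s1 \<Longrightarrow> fst p \<noteq> 0"
  unfolding Kseg_def Kcone_def by (smt (verit) mem_Collect_eq norm_ge_zero)

lemma cu: "continuous_on (Kseg s0 s1) u"
  using C1 unfolding C1_on_def continuous_on_eq_continuous_within
  by (auto intro: has_derivative_continuous)

lemma cut: "continuous_on (Kseg s0 s1) ut" "continuous_on (Kseg s0 s1) u1" "continuous_on (Kseg s0 s1) u2"
  using C1 unfolding C1_on_def by auto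

lemma cdbar:
  "continuous_on (Kseg s0 s1) (dbar_s ut)"
  "continuous_on (Kseg s0 s1) (dbar_1 ut u1)"
  "continuous_on (Kseg s0 s1) (dbar_2 ut u2)"
  unfolding dbar_s_def dbar_1_def dbar_2_def hs_def
  by (intro continuous_intros cut; use Kseg_fst in auto)+

end

lemma cont_slice2:
  assumes "continuous_on (U \<times> C) (\<lambda>p. f (fst p) (snd p))" "s \<in> U"
  shows "continuous_on C (f s)"
  using cont_slice[of U C f s] assms by (simp add: case_prod_unfold)

theorem lemma2p2:
  shows "\<exists>C::real. \<forall>s0 s1 :: real. \<forall>u ut u1 u2 :: pt \<Rightarrow> real.
    1 < s0 \<and> s0 < s1 \<and>
    C1_on (Kseg s0 s1) u ut u1 u2 \<and>
    (\<exists>V. open V \<and> cone_bdry \<subseteq> V \<and> (\<forall>p \<in> Kseg s0 s1 \<inter> V. u p = 0))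
    \<longrightarrow>
    L2H s1 (\<lambda>p. (hs p / fst p) * u p)
      \<le> L2H s0 (\<lambda>p. (hs p / fst p) * u p)
         + C * (\<integral>s\<in>{s0..s1}. (1 / s) * sqrt (Econ s u ut u1 u2) \<partial>lborel)"
proof (intro exI[of _ 2] allI impI, elim conjE exE)
  fix s0 s1 :: real and u ut u1 u2 :: "pt \<Rightarrow> real" and V :: "pt set"
  assume s0: "1 < s0" "s0 < s1" and C1: "C1_on (Kseg s0 s1) u ut u1 u2"
    and oV: "open V" and cV: "cone_bdry \<subseteq> V" and uV: "\<forall>p\<in>Kseg s0 s1 \<inter> V. u p = 0"
  obtain \<delta> where dpos: "\<delta> > 0"
    and band: "\<And>s x. s \<in> {s0..s1} \<Longrightarrow> (s^2-1)/2 - 4*\<delta> < norm x \<Longrightarrow> norm x < (s^2-1)/2 \<Longrightarrow> hpt s x \<in> V"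
    using band_V[of s0 V s1] s0 oV cV by auto
  interpret cfg s0 s1 u ut u1 u2 V \<delta>
  proof unfold_locales
    show "1 < s0" "s0 < s1" using s0 by auto
    show "C1_on (Kseg s0 s1) u ut u1 u2" by (rule C1)
    show "\<forall>p\<in>Kseg s0 s1 \<inter> V. u p = 0" by (rule uV)
    show "\<delta> > 0" by (rule dpos)
    show "hpt s x \<in> V" if "s \<in> {s0..s1}" "(s^2-1)/2 - 4*\<delta> < norm x" "norm x < (s^2-1)/2" for s x
      by (rule band[OF that])
  qed
  define R where "R = (s1^2-1)/2 + 1"
  define U where "U = {s0..s1}"
  define C :: "(real \<times> real) set" where "C = cbox (-R,-R) (R,R)"
  have "1 < s1^2" using one_less_power[of s1 2] s0 by simp
  then have R: "R > 0" unfolding R_def by (simp add: field_simps)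
  have outK: "hpt s x \<notin> Kcone" if s: "s \<in> U" and x: "R \<le> norm x" for s x
  proof -
    have "s^2 \<le> s1^2" using s s0 unfolding U_def by (intro power_mono) auto
    then have "\<not> norm x < (s^2-1)/2" using x unfolding R_def by (simp add: field_simps)
    then show ?thesis using hpt_Kcone[OF Upos[of s]] s unfolding U_def by simp
  qed
  have outC: "R \<le> norm x" if "x \<notin> C" for x :: "real \<times> real"
  proof -
    have "\<bar>fst x\<bar> > R \<or> \<bar>snd x\<bar> > R" using that unfolding C_def
      by (cases x) (auto simp: cbox_Pair_iff)
    moreover have "\<bar>fst x\<bar> \<le> norm x" "\<bar>snd x\<bar> \<le> norm x"
      using norm_fst_le[of "fst x" "snd x"] norm_snd_le[of "snd x" "fst x"] by auto
    ultimately show ?thesis by linarith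
  qed
  have zb: "\<And>s x. s \<in> {s0..s1} \<Longrightarrow> (s^2-1)/2 - 4*\<delta> < norm x \<Longrightarrow> Zf u s x = 0"
           "\<And>s x. s \<in> {s0..s1} \<Longrightarrow> (s^2-1)/2 - 4*\<delta> < norm x \<Longrightarrow> Zf (dbar_s ut) s x = 0"
           "\<And>s x. s \<in> {s0..s1} \<Longrightarrow> (s^2-1)/2 - 4*\<delta> < norm x \<Longrightarrow> Zf (dbar_1 ut u1) s x = 0"
           "\<And>s x. s \<in> {s0..s1} \<Longrightarrow> (s^2-1)/2 - 4*\<delta> < norm x \<Longrightarrow> Zf (dbar_2 ut u2) s x = 0"
    using Zband by auto
  have sub: "U \<times> C \<subseteq> {s0..s1} \<times> UNIV" unfolding U_def by auto
  have cv: "continuous_on (U \<times> C) (\<lambda>p. Zf u (fst p) (snd p))"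
    by (rule continuous_on_subset[OF Zcont[OF cu zb(1)] sub])
  have ca: "continuous_on (U \<times> C) (\<lambda>p. Zf (dbar_s ut) (fst p) (snd p))"
    by (rule continuous_on_subset[OF Zcont[OF cdbar(1) zb(2)] sub])
  have cb1: "continuous_on (U \<times> C) (\<lambda>p. Zf (dbar_1 ut u1) (fst p) (snd p))"
    by (rule continuous_on_subset[OF Zcont[OF cdbar(2) zb(3)] sub])
  have cb2: "continuous_on (U \<times> C) (\<lambda>p. Zf (dbar_2 ut u2) (fst p) (snd p))"
    by (rule continuous_on_subset[OF Zcont[OF cdbar(3) zb(4)] sub])
  have vz: "Zf u s (y1, y2) = 0" if "s \<in> {s0..s1}" "\<bar>y1\<bar> = R \<or> \<bar>y2\<bar> = R" for s y1 y2
  proof -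
    have "\<bar>y1\<bar> \<le> norm (y1, y2)" "\<bar>y2\<bar> \<le> norm (y1, y2)"
      using norm_fst_le[of y1 y2] norm_snd_le[of y2 y1] by auto
    then have "R \<le> norm (y1, y2)" using that(2) by auto
    then show ?thesis using outK[of s "(y1, y2)"] that(1) unfolding U_def Zf_def zext_def by auto
  qed
  show "L2H s1 (\<lambda>p. (hs p / fst p) * u p)
      \<le> L2H s0 (\<lambda>p. (hs p / fst p) * u p)
         + 2 * (\<integral>s\<in>{s0..s1}. (1 / s) * sqrt (Econ s u ut u1 u2) \<partial>lborel)"
  proof -
    have s0p: "0 < s0" using s0 by simp
    have main: "sqrt (integral (cbox (-R,-R) (R,R)) (\<lambda>x. s1^2 * (Zf u s1 x)^2 / (s1^2 + (fst x)^2 + (snd x)^2)))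
      \<le> sqrt (integral (cbox (-R,-R) (R,R)) (\<lambda>x. s0^2 * (Zf u s0 x)^2 / (s0^2 + (fst x)^2 + (snd x)^2)))
        + 2 * integral {s0..s1} (\<lambda>s. 1 / s * sqrt (integral (cbox (-R,-R) (R,R))
          (\<lambda>x. (s * Zf (dbar_s ut) s x + 2 * (fst x * Zf (dbar_1 ut u1) s x + snd x * Zf (dbar_2 ut u2) s x) + Zf u s x)^2
               + (s * Zf (dbar_1 ut u1) s x)^2 + (s * Zf (dbar_2 ut u2) s x)^2)))"
      by (rule core[OF s0p s0(2) R cv[unfolded U_def C_def] ca[unfolded U_def C_def]
            cb1[unfolded U_def C_def] cb2[unfolded U_def C_def] da_full db1_full db2_full vz])
    have gc: "continuous_on {s0..s1} (\<lambda>s. 1 / s * sqrt (integral (cbox (-R,-R) (R,R))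
          (\<lambda>x. (s * Zf (dbar_s ut) s x + 2 * (fst x * Zf (dbar_1 ut u1) s x + snd x * Zf (dbar_2 ut u2) s x) + Zf u s x)^2
               + (s * Zf (dbar_1 ut u1) s x)^2 + (s * Zf (dbar_2 ut u2) s x)^2)))"
      by (rule core_cont[OF s0p cv[unfolded U_def C_def] ca[unfolded U_def C_def]
            cb1[unfolded U_def C_def] cb2[unfolded U_def C_def]])
    have Zout: "Zf F s x = 0" if "s \<in> U" "x \<notin> C" for F s x
      using outK[OF that(1) outC[OF that(2)]] by (simp add: Zf_def zext_def)
    have L2: "L2H s (\<lambda>p. (hs p / fst p) * u p)
        = sqrt (integral (cbox (-R,-R) (R,R)) (\<lambda>x. s^2 * (Zf u s x)^2 / (s^2 + (fst x)^2 + (snd x)^2)))"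
      if s: "s \<in> U" for s
    proof -
      have sp: "s > 0" using s Upos unfolding U_def by auto
      have Qp: "s^2 + (fst x)^2 + (snd x)^2 > 0" for x :: "real \<times> real" using sp by (simp add: add_pos_nonneg)
      have pw: "zext (\<lambda>p. ((hs p / fst p) * u p)^2) (hpt s x) = s^2 * (Zf u s x)^2 / (s^2 + (fst x)^2 + (snd x)^2)"
        for x :: "real \<times> real"
      proof (cases "hpt s x \<in> Kcone")
        case True
        have "(sqrt (s^2 + (norm x)^2))^2 = s^2 + (fst x)^2 + (snd x)^2"
          by (simp add: norm_sq_pair add_nonneg_nonneg)
        then show ?thesis using True sp
          by (simp add: zext_def Zf_def hpt_simps power_mult_distrib power_divide)
      next
        case False
        then show ?thesis by (simp add: zext_def Zf_def)
      qed
      have "intH s (\<lambda>p. ((hs p / fst p) * u p)^2)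
          = integral\<^sup>L lborel (\<lambda>x. s^2 * (Zf u s x)^2 / (s^2 + (fst x)^2 + (snd x)^2))"
        unfolding intH_def pw ..
      also have "\<dots> = integral (cbox (-R,-R) (R,R)) (\<lambda>x. s^2 * (Zf u s x)^2 / (s^2 + (fst x)^2 + (snd x)^2))"
      proof (rule bochner_hk)
        have "continuous_on C (Zf u s)" by (rule cont_slice2[OF cv s])
        then show "continuous_on (cbox (-R,-R) (R,R)) (\<lambda>x. s^2 * (Zf u s x)^2 / (s^2 + (fst x)^2 + (snd x)^2))"
          unfolding C_def using Qp by (intro continuous_intros) (auto simp: less_imp_neq[symmetric] dest: less_imp_neq)
        show "s^2 * (Zf u s x)^2 / (s^2 + (fst x)^2 + (snd x)^2) = 0" if "x \<notin> cbox (-R,-R) (R,R)" for x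
          using Zout[OF s, of x u] that unfolding C_def by simp
      qed
      finally show ?thesis unfolding L2H_def by simp
    qed
    have EC: "Econ s u ut u1 u2 = integral (cbox (-R,-R) (R,R))
          (\<lambda>x. (s * Zf (dbar_s ut) s x + 2 * (fst x * Zf (dbar_1 ut u1) s x + snd x * Zf (dbar_2 ut u2) s x) + Zf u s x)^2
               + (s * Zf (dbar_1 ut u1) s x)^2 + (s * Zf (dbar_2 ut u2) s x)^2)"
      if s: "s \<in> U" for s
    proof -
      have sp: "s > 0" using s Upos unfolding U_def by auto
      have pw: "zext (\<lambda>p. (Kop ut u1 u2 p + u p)^2 + (s * dbar_1 ut u1 p)^2 + (s * dbar_2 ut u2 p)^2) (hpt s x)
        = (s * Zf (dbar_s ut) s x + 2 * (fst x * Zf (dbar_1 ut u1) s x + snd x * Zf (dbar_2 ut u2) s x) + Zf u s x)^2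
               + (s * Zf (dbar_1 ut u1) s x)^2 + (s * Zf (dbar_2 ut u2) s x)^2"
        for x :: "real \<times> real"
      proof (cases "hpt s x \<in> Kcone")
        case True
        then show ?thesis using sp by (simp add: zext_def Zf_def hpt_simps Kop_def)
      next
        case False
        then show ?thesis by (simp add: zext_def Zf_def)
      qed
      have "Econ s u ut u1 u2 = integral\<^sup>L lborel (\<lambda>x. (s * Zf (dbar_s ut) s x + 2 * (fst x * Zf (dbar_1 ut u1) s x + snd x * Zf (dbar_2 ut u2) s x) + Zf u s x)^2
               + (s * Zf (dbar_1 ut u1) s x)^2 + (s * Zf (dbar_2 ut u2) s x)^2)"
        unfolding Econ_def intH_def pw ..
      also have "\<dots> = integral (cbox (-R,-R) (R,R)) (\<lambda>x. (s * Zf (dbar_s ut) s x + 2 * (fst x * Zf (dbar_1 ut u1) s x + snd x * Zf (dbar_2 ut u2) s x) + Zf u s x)^2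
               + (s * Zf (dbar_1 ut u1) s x)^2 + (s * Zf (dbar_2 ut u2) s x)^2)"
      proof (rule bochner_hk)
        have "continuous_on C (Zf u s)" by (rule cont_slice2[OF cv s])
        moreover have "continuous_on C (Zf (dbar_s ut) s)" by (rule cont_slice2[OF ca s])
        moreover have "continuous_on C (Zf (dbar_1 ut u1) s)" by (rule cont_slice2[OF cb1 s])
        moreover have "continuous_on C (Zf (dbar_2 ut u2) s)" by (rule cont_slice2[OF cb2 s])
        ultimately show "continuous_on (cbox (-R,-R) (R,R)) (\<lambda>x. (s * Zf (dbar_s ut) s x + 2 * (fst x * Zf (dbar_1 ut u1) s x + snd x * Zf (dbar_2 ut u2) s x) + Zf u s x)^2
               + (s * Zf (dbar_1 ut u1) s x)^2 + (s * Zf (dbar_2 ut u2) s x)^2)"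
          unfolding C_def by (intro continuous_intros)
        show "(s * Zf (dbar_s ut) s x + 2 * (fst x * Zf (dbar_1 ut u1) s x + snd x * Zf (dbar_2 ut u2) s x) + Zf u s x)^2
               + (s * Zf (dbar_1 ut u1) s x)^2 + (s * Zf (dbar_2 ut u2) s x)^2 = 0"
          if "x \<notin> cbox (-R,-R) (R,R)" for x
          using Zout[OF s, of x] that unfolding C_def by simp
      qed
      finally show ?thesis .
    qed
    have LI: "(\<integral>s\<in>{s0..s1}. (1 / s) * sqrt (Econ s u ut u1 u2) \<partial>lborel)
       = integral {s0..s1} (\<lambda>s. 1 / s * sqrt (integral (cbox (-R,-R) (R,R))
          (\<lambda>x. (s * Zf (dbar_s ut) s x + 2 * (fst x * Zf (dbar_1 ut u1) s x + snd x * Zf (dbar_2 ut u2) s x) + Zf u s x)^2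
               + (s * Zf (dbar_1 ut u1) s x)^2 + (s * Zf (dbar_2 ut u2) s x)^2)))"
    proof -
      have "(\<integral>s\<in>{s0..s1}. (1 / s) * sqrt (Econ s u ut u1 u2) \<partial>lborel)
        = (\<integral>s\<in>{s0..s1}. 1 / s * sqrt (integral (cbox (-R,-R) (R,R))
          (\<lambda>x. (s * Zf (dbar_s ut) s x + 2 * (fst x * Zf (dbar_1 ut u1) s x + snd x * Zf (dbar_2 ut u2) s x) + Zf u s x)^2
               + (s * Zf (dbar_1 ut u1) s x)^2 + (s * Zf (dbar_2 ut u2) s x)^2)) \<partial>lborel)"
        by (rule set_lebesgue_integral_cong) (auto simp: EC U_def)
      also have "\<dots> = integral {s0..s1} (\<lambda>s. 1 / s * sqrt (integral (cbox (-R,-R) (R,R))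
          (\<lambda>x. (s * Zf (dbar_s ut) s x + 2 * (fst x * Zf (dbar_1 ut u1) s x + snd x * Zf (dbar_2 ut u2) s x) + Zf u s x)^2
               + (s * Zf (dbar_1 ut u1) s x)^2 + (s * Zf (dbar_2 ut u2) s x)^2)))"
        by (rule set_borel_integral_eq_integral(2)[OF borel_integrable_atLeastAtMost'[OF gc]])
      finally show ?thesis .
    qed
    have "s0 \<in> U" "s1 \<in> U" using s0 unfolding U_def by auto
    then show ?thesis using main L2 LI by simp
  qed
qed

end
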